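(* Let $(X,\leqslant)$ be a finite poset, $U$ a finite set of users with security function $\lambda\colon U\to X$, and $T=(X,E)$ a derivation out-tree with root $r$. Let $\phi=\phi_E$ be the key allocation function determined by $T$. Then \[ \sum_{x\in X,\ x\neq r}|U(x)|\cdot|\phi(x)| \;=\; \sum_{e\in E}\omega(e). \]
   Context: A derivation out-tree for $(X,\leqslant)$ is a spanning out-tree $T=(X,E)$ (a rooted tree on vertex set $X$ with all arcs oriented away from the root) such that $xy\in E$ implies $y<x$; its root $r$ is then the maximum element of $X$. Define $\phi_E\colon X\to 2^X$ by $\phi_E(r)=\{r\}$ and, for $x\neq r$, $\phi_E(x)=\{z\in X:\exists y\in X \text{ with } yz\in E,\ x\geqslant z,\ x\not\geqslant y\}$. For $u\in U$ write $U(x)=\{u\in U:\lambda(u)=x\}$. For $y,z\in X$ with $z<y$, let $\gamma(yz)=\{x\in X: x\geqslant z,\ x\not\geqslant y\}$ and define the weight $\omega(yz)=\sum_{x\in\gamma(yz)}|U(x)|$. *)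

theory Defs
  imports Main
begin

definition poset_on :: "'a set \<Rightarrow> ('a \<Rightarrow> 'a \<Rightarrow> bool) \<Rightarrow> bool" where
  "poset_on X le \<longleftrightarrow>
     (\<forall>x\<in>X. le x x) \<and>
     (\<forall>x\<in>X. \<forall>y\<in>X. le x y \<and> le y x \<longrightarrow> x = y) \<and>
     (\<forall>x\<in>X. \<forall>y\<in>X. \<forall>z\<in>X. le x y \<and> le y z \<longrightarrow> le x z)"

definition spanning_out_tree :: "'a set \<Rightarrow> ('a \<times> 'a) set \<Rightarrow> 'a \<Rightarrow> bool" where
  "spanning_out_tree X E r \<longleftrightarrow>
     r \<in> X \<and> E \<subseteq> X \<times> X \<and>
     (\<forall>y. (y, r) \<notin> E) \<and>
     (\<forall>x\<in>X. x \<noteq> r \<longrightarrow> (\<exists>!y. (y, x) \<in> E)) \<and>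
     (\<forall>x\<in>X. (r, x) \<in> E\<^sup>*)"

definition derivation_out_tree ::
  "'a set \<Rightarrow> ('a \<Rightarrow> 'a \<Rightarrow> bool) \<Rightarrow> ('a \<times> 'a) set \<Rightarrow> 'a \<Rightarrow> bool" where
  "derivation_out_tree X le E r \<longleftrightarrow>
     spanning_out_tree X E r \<and> (\<forall>(y, z)\<in>E. le z y \<and> z \<noteq> y)"

definition phiE ::
  "'a set \<Rightarrow> ('a \<Rightarrow> 'a \<Rightarrow> bool) \<Rightarrow> ('a \<times> 'a) set \<Rightarrow> 'a \<Rightarrow> 'a \<Rightarrow> 'a set" where
  "phiE X le E r x =
     (if x = r then {r}
      else {z \<in> X. \<exists>y\<in>X. (y, z) \<in> E \<and> le z x \<and> \<not> le y x})"

definition users_at :: "'u set \<Rightarrow> ('u \<Rightarrow> 'a) \<Rightarrow> 'a \<Rightarrow> 'u set" where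
  "users_at U lam x = {u \<in> U. lam u = x}"

definition gamma :: "'a set \<Rightarrow> ('a \<Rightarrow> 'a \<Rightarrow> bool) \<Rightarrow> 'a \<Rightarrow> 'a \<Rightarrow> 'a set" where
  "gamma X le y z = {x \<in> X. le z x \<and> \<not> le y x}"

definition weight ::
  "'a set \<Rightarrow> ('a \<Rightarrow> 'a \<Rightarrow> bool) \<Rightarrow> 'u set \<Rightarrow> ('u \<Rightarrow> 'a) \<Rightarrow> 'a \<Rightarrow> 'a \<Rightarrow> nat" where
  "weight X le U lam y z = (\<Sum>x\<in>gamma X le y z. card (users_at U lam x))"

end

theory Submission
  imports Defs
begin

theorem theorem2:
  fixes X :: "'a set" and le :: "'a \<Rightarrow> 'a \<Rightarrow> bool"
    and U :: "'u set" and lam :: "'u \<Rightarrow> 'a"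
    and E :: "('a \<times> 'a) set" and r :: 'a
  assumes "finite X" and "poset_on X le"
    and "finite U" and "\<forall>u\<in>U. lam u \<in> X"
    and "derivation_out_tree X le E r"
  shows "(\<Sum>x\<in>X - {r}. card (users_at U lam x) * card (phiE X le E r x))
         = (\<Sum>(y, z)\<in>E. weight X le U lam y z)"
proof -
  define c where "c x = card (users_at U lam x)" for x
  define S where "S x = {e\<in>E. le (snd e) x \<and> \<not> le (fst e) x}" for x
  have P: "\<forall>x\<in>X. le x x" "\<forall>x\<in>X. \<forall>y\<in>X. \<forall>z\<in>X. le x y \<and> le y z \<longrightarrow> le x z"
    using assms(2) unfolding poset_on_def by blast+
  have T: "r \<in> X" "E \<subseteq> X \<times> X" "\<forall>y. (y, r) \<notin> E"
    "\<forall>x\<in>X. x \<noteq> r \<longrightarrow> (\<exists>!y. (y, x) \<in> E)" "\<forall>x\<in>X. (r, x) \<in> E\<^sup>*"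
    and D: "\<forall>(y, z)\<in>E. le z y \<and> z \<noteq> y"
    using assms(5) unfolding derivation_out_tree_def spanning_out_tree_def by blast+
  have finE: "finite E" using T(2) assms(1) by (meson finite_SigmaI finite_subset)
  have maxr: "le x r" if "x \<in> X" for x
  proof -
    have "(r, x) \<in> E\<^sup>*" using T(5) that by blast
    then have "x \<in> X \<and> le x r"
    proof (induction rule: rtrancl_induct)
      case base then show ?case using T(1) P(1) by blast
    next
      case (step y z)
      have "z \<in> X" "y \<in> X" using step.hyps(2) T(2) by auto
      moreover have "le z y" using step.hyps(2) D by blast
      ultimately show ?case using step.IH P(2) T(1) by blast
    qed
    then show ?thesis by blast
  qed
  have rhs: "(\<Sum>(y, z)\<in>E. weight X le U lam y z) = (\<Sum>x\<in>X. c x * card (S x))"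
  proof -
    have "(\<Sum>(y, z)\<in>E. weight X le U lam y z)
        = (\<Sum>e\<in>E. \<Sum>x\<in>X. if le (snd e) x \<and> \<not> le (fst e) x then c x else 0)"
      unfolding weight_def gamma_def c_def
      by (rule sum.cong) (auto simp: sum.If_cases[OF assms(1)] Int_def)
    also have "\<dots> = (\<Sum>x\<in>X. \<Sum>e\<in>E. if le (snd e) x \<and> \<not> le (fst e) x then c x else 0)"
      by (rule sum.swap)
    also have "\<dots> = (\<Sum>x\<in>X. c x * card (S x))"
      by (rule sum.cong) (auto simp: sum.If_cases[OF finE] S_def Int_def)
    finally show ?thesis .
  qed
  have Sr: "S r = {}" using maxr T(2) unfolding S_def by auto
  have Sx: "card (S x) = card (phiE X le E r x)" if "x \<in> X" "x \<noteq> r" for x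
  proof -
    have "phiE X le E r x = snd ` S x"
      using that T(2) unfolding phiE_def S_def by (auto simp: image_iff)
    moreover have "inj_on snd (S x)"
    proof (rule inj_onI)
      fix a b assume a: "a \<in> S x" "b \<in> S x" "snd a = snd b"
      obtain y z where ab: "a = (y, z)" by (cases a)
      obtain y' where bb: "b = (y', z)" using a(3) ab by (cases b) auto
      have "(y, z) \<in> E" "(y', z) \<in> E" using a ab bb unfolding S_def by auto
      moreover have "z \<in> X" "z \<noteq> r" using calculation T(2,3) by auto
      ultimately show "a = b" using T(4) ab bb by blast
    qed
    ultimately show ?thesis by (simp add: card_image)
  qed
  have "(\<Sum>x\<in>X. c x * card (S x)) = c r * card (S r) + (\<Sum>x\<in>X - {r}. c x * card (S x))"
    using T(1) assms(1) by (simp add: sum.remove)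
  also have "\<dots> = (\<Sum>x\<in>X - {r}. card (users_at U lam x) * card (phiE X le E r x))"
    using Sr Sx by (auto simp: c_def intro!: sum.cong)
  finally show ?thesis using rhs by simp
qed

end
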